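(* Let $\eta$ be a random variable taking values in $\{0,1,2,\dots\}\cup\{\infty\}$ with $P(\eta=0)<1$. If $(p_n)_{n\in\mathbb{N}}$ is a sequence in $(0,1]$ with $\lim_{n\to\infty}p_n=1$, then for every $\epsilon\in(0,1)$, \[\lim_{n\to\infty}P\big(V_\infty(\mathcal{K}_n,p_n)\geq (1-\epsilon)n\big)=1.\]
   Context: Frog model on the complete graph: $\mathcal{K}_n=(\mathcal{V}_n,\mathcal{E}_n)$ is the complete graph on $n$ vertices (every pair of distinct vertices joined by an edge), with a distinguished vertex $o$ called the root. Let $\{\eta_v\}_{v\in\mathcal{V}_n}$ be i.i.d. copies of $\eta$. Initially each vertex $v\neq o$ carries $\eta_v$ inactive particles and $o$ carries $1+\eta_o$ active particles. At each instant of time, independently of everything else, each active particle survives with probability $p$ and otherwise dies (is permanently removed); a surviving active particle performs one step of simple random walk on $\mathcal{K}_n$ (jumps to a uniformly chosen vertex different from its current one), activating all inactive particles at the vertex it reaches. Inactive particles stay put until activated. A vertex is visited if some active particle is ever at it (the root is visited). $V_\infty(\mathcal{K}_n,p)$ is the total number of visited vertices once no active particles remain; in the cases $P(\eta=\infty)>0$ or $p=1$ one sets $V_\infty(\mathcal{K}_n,p):=n$. *)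

theory Defs
  imports "HOL-Probability.Probability" "HOL-Library.Extended_Nat"
begin

text \<open>Frog model on the complete graph K_n with vertex set {0..<n} and root 0.
  A state is (A, Vis): A = multiset of positions of active particles, Vis = set of
  visited vertices. Inactive particles at v are exactly the eta v initial ones when
  v is not in Vis (and none otherwise), so they need not be stored.\<close>

fun frog_move :: "real \<Rightarrow> nat \<Rightarrow> nat list \<Rightarrow> nat multiset pmf" where
  "frog_move p n [] = return_pmf {#}"
| "frog_move p n (x # xs) =
     bind_pmf (bernoulli_pmf p) (\<lambda>b.
     bind_pmf (frog_move p n xs) (\<lambda>M.
       if b then map_pmf (\<lambda>y. add_mset y M) (pmf_of_set ({0..<n} - {x}))
       else return_pmf M))"

definition frog_step :: "real \<Rightarrow> nat \<Rightarrow> (nat \<Rightarrow> nat) \<Rightarrow>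
    nat multiset \<times> nat set \<Rightarrow> (nat multiset \<times> nat set) pmf" where
  "frog_step p n eta s =
     map_pmf (\<lambda>M. (M + (\<Sum>v\<in>set_mset M - snd s. replicate_mset (eta v) v),
                    snd s \<union> set_mset M))
       (frog_move p n (sorted_list_of_multiset (fst s)))"

definition frog_start :: "(nat \<Rightarrow> nat) \<Rightarrow> nat multiset \<times> nat set" where
  "frog_start eta = (replicate_mset (1 + eta 0) 0, {0})"

definition frog_state :: "real \<Rightarrow> nat \<Rightarrow> (nat \<Rightarrow> nat) \<Rightarrow> nat \<Rightarrow>
    (nat multiset \<times> nat set) pmf" where
  "frog_state p n eta t = ((\<lambda>D. bind_pmf D (frog_step p n eta)) ^^ t) (return_pmf (frog_start eta))"

text \<open>Initial configuration: eta_v i.i.d. with law eta (used when eta is a.s. finite).\<close>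
definition frog_init :: "enat pmf \<Rightarrow> nat \<Rightarrow> (nat \<Rightarrow> nat) pmf" where
  "frog_init eta n = Pi_pmf {0..<n} 0 (\<lambda>_. map_pmf the_enat eta)"

definition frog_time :: "enat pmf \<Rightarrow> real \<Rightarrow> nat \<Rightarrow> nat \<Rightarrow> (nat multiset \<times> nat set) pmf" where
  "frog_time eta p n t = bind_pmf (frog_init eta n) (\<lambda>e. frog_state p n e t)"

text \<open>P(V_infinity(K_n,p) \<ge> x). Since the visited set is nondecreasing in time and
  V_infinity is its final cardinality, {V_infinity \<ge> x} is the increasing union over t
  of {V_t \<ge> x}, so its probability is the supremum over t. Conventionally
  V_infinity = n if P(eta = infinity) > 0 or p = 1.\<close>
definition frog_prob_ge :: "enat pmf \<Rightarrow> real \<Rightarrow> nat \<Rightarrow> real \<Rightarrow> real" where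
  "frog_prob_ge eta p n x =
     (if pmf eta \<infinity> > 0 \<or> p = 1 then (if x \<le> real n then 1 else 0)
      else (SUP t. measure_pmf.prob (frog_time eta p n t) {s. x \<le> real (card (snd s))}))"

end

theory Submission
  imports Defs "HOL-Real_Asymp.Real_Asymp"
begin

lemma frog_move_support:
  assumes "2 \<le> n"
  shows "M \<in> set_pmf (frog_move p n xs) \<Longrightarrow> set_mset M \<subseteq> {0..<n}"
proof (induction xs arbitrary: M)
  case Nil then show ?case by simp
next
  case (Cons x xs)
  have fin: "finite ({0..<n} - {x})" by simp
  have "(if x = 0 then 1 else 0) \<in> {0..<n} - {x}" using assms by auto
  then have ne: "{0..<n} - {x} \<noteq> {}" by blast
  from Cons.prems show ?case using fin ne
    by (auto split: if_splits dest!: Cons.IH)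
qed

lemma frog_move_bound:
  fixes G :: "nat multiset \<Rightarrow> real"
  assumes n: "2 \<le> n" and p: "0 \<le> p" "p \<le> 1" and rho: "0 \<le> \<rho>"
    and G0: "\<And>M. 0 \<le> G M"
    and xsn: "\<forall>x\<in>set xs. x < n"
    and step: "\<And>x M. x \<in> set xs \<Longrightarrow> set_mset M \<subseteq> {0..<n} \<Longrightarrow>
        (\<Sum>y\<in>{0..<n}-{x}. G (add_mset y M)) \<le> \<rho> * (real n - 1) * G M"
  shows "(\<integral>\<^sup>+M. ennreal (G M) \<partial>frog_move p n xs) \<le> ennreal (((1-p) + p*\<rho>)^length xs * G {#})"
  using step xsn
proof (induction xs)
  case Nil then show ?case using G0 by simp
next
  case (Cons x xs)
  define S where "S = {0..<n} - {x}"
  have fin: "finite S" by (simp add: S_def)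
  have cardS: "card S = n - 1" using Cons.prems(2) by (simp add: S_def)
  have ne: "S \<noteq> {}" using cardS n by auto
  have IH: "(\<integral>\<^sup>+M. ennreal (G M) \<partial>frog_move p n xs) \<le> ennreal (((1-p) + p*\<rho>)^length xs * G {#})"
    using Cons.IH Cons.prems by auto
  have land: "(\<integral>\<^sup>+y. ennreal (G (add_mset y M)) \<partial>pmf_of_set S) \<le> ennreal \<rho> * ennreal (G M)"
    if "M \<in> set_pmf (frog_move p n xs)" for M
  proof -
    have sub: "set_mset M \<subseteq> {0..<n}" using frog_move_support[OF n that] .
    have "(\<integral>\<^sup>+y. ennreal (G (add_mset y M)) \<partial>pmf_of_set S) = ennreal ((\<Sum>y\<in>S. G (add_mset y M)) / card S)"
      using fin ne G0 by (simp add: nn_integral_pmf_of_set ennreal_of_nat_eq_real_of_nat divide_ennreal sum_nonneg card_gt_0_iff)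
    also have "\<dots> \<le> ennreal (\<rho> * G M)"
      using Cons.prems(1)[of x M] sub cardS n G0[of M]
      by (intro ennreal_leI) (simp add: S_def divide_le_eq of_nat_diff mult.commute mult.left_commute)
    finally show ?thesis using rho G0 by (simp add: ennreal_mult)
  qed
  have "(\<integral>\<^sup>+M. ennreal (G M) \<partial>frog_move p n (x#xs)) =
     (\<integral>\<^sup>+M. (\<integral>\<^sup>+y. ennreal (G (add_mset y M)) \<partial>pmf_of_set S) \<partial>frog_move p n xs) * ennreal p
     + (\<integral>\<^sup>+M. ennreal (G M) \<partial>frog_move p n xs) * ennreal (1 - p)"
    using p by (simp add: S_def)
  also have "\<dots> \<le> (\<integral>\<^sup>+M. ennreal \<rho> * ennreal (G M) \<partial>frog_move p n xs) * ennreal p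
     + (\<integral>\<^sup>+M. ennreal (G M) \<partial>frog_move p n xs) * ennreal (1 - p)"
    by (intro add_mono mult_right_mono nn_integral_mono_AE AE_pmfI land) auto
  also have "\<dots> = ennreal (\<rho> * p + (1-p)) * (\<integral>\<^sup>+M. ennreal (G M) \<partial>frog_move p n xs)"
  proof -
    have eq: "ennreal (\<rho> * p + (1-p)) = ennreal \<rho> * ennreal p + ennreal (1-p)"
      using p rho by (simp add: ennreal_plus ennreal_mult)
    show ?thesis unfolding eq
      by (simp add: nn_integral_cmult distrib_right ac_simps)
  qed
  also have "\<dots> \<le> ennreal (\<rho> * p + (1-p)) * ennreal (((1-p) + p*\<rho>)^length xs * G {#})"
    by (intro mult_left_mono IH) auto
  also have "\<dots> = ennreal ((\<rho> * p + (1-p)) * (((1-p) + p*\<rho>)^length xs * G {#}))"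
    using p rho G0 by (intro ennreal_mult[symmetric]) auto
  also have "\<dots> = ennreal (((1-p) + p*\<rho>)^length (x#xs) * G {#})"
    by (rule arg_cong[where f=ennreal]) (simp add: algebra_simps)
  finally show ?case .
qed

definition inv_st :: "nat \<Rightarrow> nat multiset \<times> nat set \<Rightarrow> bool" where
  "inv_st n s \<longleftrightarrow> snd s \<subseteq> {0..<n} \<and> set_mset (fst s) \<subseteq> snd s"

lemma set_sum_replicate: "finite F \<Longrightarrow> set_mset (\<Sum>v\<in>F. replicate_mset (k v) v) \<subseteq> F"
  by (induction F rule: finite_induct) auto

lemma size_sum_replicate: "finite F \<Longrightarrow> size (\<Sum>v\<in>F. replicate_mset (k v) v) = (\<Sum>v\<in>F. k v)"
  by (induction F rule: finite_induct) auto

lemma frog_step_support: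
  assumes "2 \<le> n" "inv_st n s" "s' \<in> set_pmf (frog_step p n e s)"
  shows "inv_st n s'"
proof -
  from assms(3) obtain M where M: "M \<in> set_pmf (frog_move p n (sorted_list_of_multiset (fst s)))"
    and s': "s' = (M + (\<Sum>v\<in>set_mset M - snd s. replicate_mset (e v) v), snd s \<union> set_mset M)"
    by (auto simp: frog_step_def)
  have "set_mset M \<subseteq> {0..<n}" using frog_move_support[OF assms(1) M] .
  moreover have "set_mset (\<Sum>v\<in>set_mset M - snd s. replicate_mset (e v) v) \<subseteq> set_mset M - snd s"
    by (rule set_sum_replicate) simp
  ultimately show ?thesis using assms(2) unfolding s' inv_st_def by auto
qed

lemma frog_state_Suc: "frog_state p n e (Suc t) = bind_pmf (frog_state p n e t) (frog_step p n e)"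
  by (simp add: frog_state_def)

lemma frog_state_0: "frog_state p n e 0 = return_pmf (frog_start e)"
  by (simp add: frog_state_def)

lemma frog_state_support:
  assumes "2 \<le> n"
  shows "s \<in> set_pmf (frog_state p n e t) \<Longrightarrow> inv_st n s"
proof (induction t arbitrary: s)
  case 0 then show ?case using assms by (auto simp: frog_state_0 frog_start_def inv_st_def)
next
  case (Suc t)
  then obtain s0 where "s0 \<in> set_pmf (frog_state p n e t)" "s \<in> set_pmf (frog_step p n e s0)"
    by (auto simp: frog_state_Suc)
  then show ?case using Suc.IH frog_step_support[OF assms] by blast
qed

lemma frog_state_iter:
  fixes f :: "nat multiset \<times> nat set \<Rightarrow> ennreal"
  assumes n: "2 \<le> n"
    and step: "\<And>s. inv_st n s \<Longrightarrow> (\<integral>\<^sup>+s'. f s' \<partial>frog_step p n e s) \<le> \<gamma> * f s"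
  shows "(\<integral>\<^sup>+s. f s \<partial>frog_state p n e t) \<le> \<gamma>^t * f (frog_start e)"
proof (induction t)
  case 0 then show ?case by (simp add: frog_state_0)
next
  case (Suc t)
  have "(\<integral>\<^sup>+s. f s \<partial>frog_state p n e (Suc t)) = (\<integral>\<^sup>+s0. (\<integral>\<^sup>+s. f s \<partial>frog_step p n e s0) \<partial>frog_state p n e t)"
    by (simp add: frog_state_Suc)
  also have "\<dots> \<le> (\<integral>\<^sup>+s0. \<gamma> * f s0 \<partial>frog_state p n e t)"
    by (intro nn_integral_mono_AE AE_pmfI step frog_state_support[OF n])
  also have "\<dots> = \<gamma> * (\<integral>\<^sup>+s0. f s0 \<partial>frog_state p n e t)"
    by (simp add: nn_integral_cmult)
  also have "\<dots> \<le> \<gamma> * (\<gamma>^t * f (frog_start e))"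
    by (intro mult_left_mono Suc.IH) auto
  finally show ?case by (simp add: mult.assoc)
qed

lemma frog_step_integral:
  "(\<integral>\<^sup>+s'. f s' \<partial>frog_step p n e s) =
   (\<integral>\<^sup>+M. f (M + (\<Sum>v\<in>set_mset M - snd s. replicate_mset (e v) v), snd s \<union> set_mset M)
      \<partial>frog_move p n (sorted_list_of_multiset (fst s)))"
  by (simp add: frog_step_def)

lemma key_ineq:
  fixes a c m K :: real
  assumes "0 \<le> a" "a \<le> c" "3 \<le> c"
  shows "a*((a-1)/(c-1) - m)^2 + (c-a)*(a/(c-1)-m)^2 + c*(1/(K-1) - 1/(c-2))
         \<le> c*((a/c - m)^2 + 1/(K-1) - 1/(c-1))"
proof -
  have c1: "c - 1 \<noteq> 0" "c \<noteq> 0" "c - 2 \<noteq> 0" using assms by auto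
  have id: "a*((a-1)/(c-1) - m)^2 + (c-a)*(a/(c-1)-m)^2 = c*(a/c-m)^2 + a*(c-a)/(c*(c-1)^2)"
    using c1 by (simp add: field_simps) (simp add: algebra_simps power2_eq_square power4_eq_xxxx)
  have h0: "0 \<le> (c - 2*a)^2" by simp
  have q: "a*(c-a) \<le> c^2/4"
    using h0 unfolding power2_eq_square by (simp add: algebra_simps)
  have "a*(c-a)/(c*(c-1)^2) \<le> (c^2/4)/(c*(c-1)^2)"
    using q assms by (intro divide_right_mono) auto
  also have "\<dots> = c/(4*(c-1)^2)"
  proof -
    have d: "(c-1)^2 \<noteq> 0" using c1 by simp
    show ?thesis using c1(2) d by (simp add: field_simps power2_eq_square[of c])
  qed
  also have "\<dots> \<le> c/((c-1)*(c-2))"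
  proof (rule divide_left_mono)
    have "(c-1)*(c-2) \<le> (c-1)*(4*(c-1))" by (rule mult_left_mono) (use assms in auto)
    then show "(c-1)*(c-2) \<le> 4*(c-1)^2" by (simp add: power2_eq_square mult_ac)
    show "0 < 4*(c-1)^2 * ((c-1)*(c-2))" using assms by (intro mult_pos_pos) auto
  qed (use assms in auto)
  also have "\<dots> = c*(1/(c-2) - 1/(c-1))" using c1 by (simp add: field_simps)
  finally have "a*(c-a)/(c*(c-1)^2) \<le> c*(1/(c-2) - 1/(c-1))" .
  then show ?thesis unfolding id by (simp add: algebra_simps)
qed

definition Wset :: "nat \<Rightarrow> nat set \<Rightarrow> nat set" where "Wset n V = {0..<n} - V"

lemma Wset_Un: "Wset n (V \<union> X) = Wset n V - X"
  by (auto simp: Wset_def)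

lemma sum_landing:
  fixes f :: "nat \<Rightarrow> real"
  assumes "finite S" "W' \<subseteq> S" "\<And>y. y \<in> W' \<Longrightarrow> f y \<le> a" "\<And>y. y \<in> S - W' \<Longrightarrow> f y \<le> b"
  shows "sum f S \<le> real (card W') * a + (real (card S) - real (card W')) * b"
proof -
  have fw: "finite W'" using assms(1,2) finite_subset by blast
  have "sum f S = sum f (S - W') + sum f W'"
    using sum.subset_diff[OF assms(2,1)] by simp
  also have "sum f W' \<le> real (card W') * a"
    using sum_bounded_above[of W' f a] assms(3) by auto
  also have "sum f (S - W') \<le> real (card (S - W')) * b"
    using sum_bounded_above[of "S - W'" f b] assms(4) by auto
  also have "card (S - W') = card S - card W'"
    using card_Diff_subset[OF fw assms(2)] .
  also have "real (card S - card W') = real (card S) - real (card W')"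
    using card_mono[OF assms(1,2)] by simp
  finally show ?thesis by simp
qed

definition pA :: "nat \<Rightarrow> nat \<Rightarrow> nat multiset \<times> nat set \<Rightarrow> real" where
  "pA n K s = (if fst s \<noteq> {#} \<and> K < card (Wset n (snd s)) then 2 ^ card (Wset n (snd s)) else 0)"

lemma pA_nonneg: "0 \<le> pA n K s" by (simp add: pA_def)

lemma pA_step:
  assumes n: "2 \<le> n" "K + 1 \<le> n" and p: "0 \<le> p" "p \<le> 1" and inv: "inv_st n s"
  shows "(\<integral>\<^sup>+s'. ennreal (pA n K s') \<partial>frog_step p n e s)
     \<le> ennreal ((1-p) + p*(1 - (real K+1)/(2*(real n-1)))) * ennreal (pA n K s)"
proof -
  define V where "V = snd s"
  define A where "A = fst s"
  define W where "W = Wset n V"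
  define \<rho> where "\<rho> = 1 - (real K+1)/(2*(real n-1))"
  define G where "G M = (if K < card (W - set_mset M) then 2 ^ card (W - set_mset M) else (0::real))" for M
  have finW: "finite W" by (simp add: W_def Wset_def)
  have rho0: "0 \<le> \<rho>" using n by (simp add: \<rho>_def field_simps)
  have rho1: "\<rho> \<le> 1" using n by (simp add: \<rho>_def field_simps)
  have G0: "0 \<le> G M" for M by (simp add: G_def)
  have pt: "pA n K (M + X, V \<union> set_mset M) \<le> G M" for M X
    by (simp add: pA_def G_def Wset_Un W_def)
  show ?thesis
  proof (cases "A = {#}")
    case True
    then show ?thesis by (simp add: frog_step_integral A_def pA_def)
  next
    case False
    define xs where "xs = sorted_list_of_multiset A"
    have lenA: "length xs = size A" by (metis mset_sorted_list_of_multiset size_mset xs_def)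
    have len: "1 \<le> length xs" using False by (simp add: lenA Suc_le_eq nonempty_has_size)
    have setxs: "set xs = set_mset A" by (simp add: xs_def)
    have "(\<integral>\<^sup>+s'. ennreal (pA n K s') \<partial>frog_step p n e s) \<le> (\<integral>\<^sup>+M. ennreal (G M) \<partial>frog_move p n xs)"
      unfolding frog_step_integral xs_def A_def V_def[symmetric]
      by (intro nn_integral_mono ennreal_leI pt)
    also have "\<dots> \<le> ennreal (((1-p) + p*\<rho>)^length xs * G {#})"
    proof (rule frog_move_bound[OF n(1) p rho0 G0])
      show "\<forall>x\<in>set xs. x < n" using inv by (auto simp: setxs inv_st_def A_def)
    next
      fix x M assume x: "x \<in> set xs" and M: "set_mset M \<subseteq> {0..<n}"
      have xV: "x \<in> V" "x < n" using inv x by (auto simp: setxs inv_st_def A_def V_def)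
      define W' where "W' = W - set_mset M"
      have sub: "W' \<subseteq> {0..<n} - {x}" using xV by (auto simp: W'_def W_def Wset_def)
      have cS: "card ({0..<n} - {x}) = n - 1" using xV by simp
      have cW: "card W' \<le> n - 1" using card_mono[OF _ sub] cS by simp
      have e1: "W - insert y (set_mset M) = W' - {y}" for y by (auto simp: W'_def)
      have e2: "y \<notin> W' \<Longrightarrow> W' - {y} = W'" for y by auto
      show "(\<Sum>y\<in>{0..<n}-{x}. G (add_mset y M)) \<le> \<rho> * (real n - 1) * G M"
      proof (cases "K < card W'")
        case True
        have cW1: "y \<in> W' \<Longrightarrow> card (W' - {y}) = card W' - 1" for y
          using finW by (simp add: W'_def)
        have "(\<Sum>y\<in>{0..<n}-{x}. G (add_mset y M)) \<le> real (card W') * (2 ^ card W' / 2)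
              + (real (card ({0..<n}-{x})) - real (card W')) * 2 ^ card W'"
        proof (rule sum_landing[OF _ sub])
          fix y assume y: "y \<in> W'"
          have "card W' = Suc (card W' - 1)" using True by simp
          then have "(2::real) ^ (card W' - 1) = 2 ^ card W' / 2"
            by (metis nonzero_mult_div_cancel_left power_Suc zero_neq_numeral)
          then show "G (add_mset y M) \<le> 2 ^ card W' / 2"
            using y by (simp add: G_def e1 cW1)
        next
          fix y assume y: "y \<in> {0..<n} - {x} - W'"
          then show "G (add_mset y M) \<le> 2 ^ card W'"
            using True by (simp add: G_def e1 e2)
        qed simp
        also have "\<dots> = 2 ^ card W' * (real n - 1 - real (card W') / 2)"
          using cS n by (simp add: of_nat_diff algebra_simps)
        also have "\<dots> \<le> 2 ^ card W' * (real n - 1 - real (K+1) / 2)"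
          using True by (intro mult_left_mono) auto
        also have "\<dots> = \<rho> * (real n - 1) * G M"
          using True n by (simp add: G_def W'_def \<rho>_def field_simps)
        finally show ?thesis .
      next
        case False
        have "G (add_mset y M) = 0" for y
          using False card_mono[of W' "W' - {y}"] finW
          by (auto simp: G_def e1 W'_def)
        then show ?thesis using False by (simp add: G_def W'_def)
      qed
    qed
    also have "\<dots> \<le> ennreal (((1-p) + p*\<rho>) * pA n K s)"
    proof (rule ennreal_leI)
      have b0: "0 \<le> (1-p) + p*\<rho>" using p rho0 by simp
      have b1: "(1-p) + p*\<rho> \<le> 1" using p rho1 mult_left_mono[OF rho1 p(1)] by simp
      have "((1-p) + p*\<rho>)^length xs \<le> ((1-p) + p*\<rho>)^1"
        by (rule power_decreasing[OF len b0 b1])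
      moreover have "G {#} = pA n K s" using False by (simp add: G_def pA_def A_def W_def V_def)
      ultimately show "((1-p) + p*\<rho>)^length xs * G {#} \<le> ((1-p) + p*\<rho>) * pA n K s"
        using pA_nonneg[of n K s] by (simp add: mult_right_mono)
    qed
    also have "\<dots> = ennreal ((1-p) + p*\<rho>) * ennreal (pA n K s)"
      using p rho0 pA_nonneg[of n K s] by (simp add: ennreal_mult)
    finally show ?thesis by (simp add: \<rho>_def)
  qed
qed

definition onesf :: "(nat \<Rightarrow> nat) \<Rightarrow> nat set \<Rightarrow> nat set" where
  "onesf e U = {v\<in>U. e v \<noteq> 0}"

lemma onesf_mono: "U \<subseteq> U' \<Longrightarrow> onesf e U \<subseteq> onesf e U'"
  by (auto simp: onesf_def)

definition p1 :: "nat \<Rightarrow> nat \<Rightarrow> real \<Rightarrow> real \<Rightarrow> (nat \<Rightarrow> nat) \<Rightarrow> nat multiset \<times> nat set \<Rightarrow> real" where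
  "p1 n K m q e s = (if m*(real K+1) < 2*real (card (onesf e (Wset n (snd s)))) then q ^ size (fst s) else 0)"

lemma p1_nonneg: "0 \<le> q \<Longrightarrow> 0 \<le> p1 n K m q e s" by (simp add: p1_def)

lemma p1_step:
  assumes n: "2 \<le> n" "K + 1 \<le> n" and p: "0 \<le> p" "p \<le> 1" and q: "0 \<le> q" "q \<le> 1"
    and m: "0 \<le> m" "m \<le> 1"
    and cond: "(1-p) + p*(q*(1 - m*(real K+1)/(2*(real n-1))*(1-q))) \<le> q"
    and inv: "inv_st n s"
  shows "(\<integral>\<^sup>+s'. ennreal (p1 n K m q e s') \<partial>frog_step p n e s) \<le> ennreal (p1 n K m q e s)"
proof -
  define V where "V = snd s"
  define A where "A = fst s"
  define W where "W = Wset n V"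
  define \<pi> where "\<pi> = m*(real K+1)/(2*(real n-1))"
  define \<rho> where "\<rho> = q*(1 - \<pi>*(1-q))"
  define xs where "xs = sorted_list_of_multiset A"
  define E where "E M = size M + (\<Sum>v\<in>set_mset M - V. e v)" for M
  define G where "G M = (if m*(real K+1) < 2*real (card (onesf e (W - set_mset M))) then q ^ E M else (0::real))" for M
  have finW: "finite W" by (simp add: W_def Wset_def)
  have pi0: "0 \<le> \<pi>" using n m by (simp add: \<pi>_def)
  have pi1: "\<pi> \<le> 1"
  proof -
    have "m*(real K+1) \<le> 1 * (2*(real n-1))"
      using n m by (intro mult_mono) auto
    then show ?thesis using n by (simp add: \<pi>_def)
  qed
  have rho0: "0 \<le> \<rho>"
  proof -
    have "\<pi>*(1-q) \<le> 1*1" using pi0 pi1 q by (intro mult_mono) auto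
    then show ?thesis using q by (simp add: \<rho>_def)
  qed
  have G0: "0 \<le> G M" for M using q by (simp add: G_def)
  have Gle: "G M \<le> q ^ E M" for M using q by (simp add: G_def)
  have lenA: "length xs = size A" by (metis mset_sorted_list_of_multiset size_mset xs_def)
  have setxs: "set xs = set_mset A" by (simp add: xs_def)
  have pt: "p1 n K m q e (M + (\<Sum>v\<in>set_mset M - V. replicate_mset (e v) v), V \<union> set_mset M) \<le> G M" for M
    by (simp add: p1_def G_def Wset_Un W_def E_def size_sum_replicate)
  have "(\<integral>\<^sup>+s'. ennreal (p1 n K m q e s') \<partial>frog_step p n e s) \<le> (\<integral>\<^sup>+M. ennreal (G M) \<partial>frog_move p n xs)"
    unfolding frog_step_integral xs_def A_def V_def[symmetric]
    by (intro nn_integral_mono ennreal_leI pt)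
  also have "\<dots> \<le> ennreal (((1-p) + p*\<rho>)^length xs * G {#})"
  proof (rule frog_move_bound[OF n(1) p rho0 G0])
    show "\<forall>x\<in>set xs. x < n" using inv by (auto simp: setxs inv_st_def A_def)
  next
    fix x M assume x: "x \<in> set xs" and M: "set_mset M \<subseteq> {0..<n}"
    have xV: "x \<in> V" "x < n" using inv x by (auto simp: setxs inv_st_def A_def V_def)
    define W' where "W' = W - set_mset M"
    define Os where "Os = onesf e W'"
    have subW: "W' \<subseteq> {0..<n} - {x}" using xV by (auto simp: W'_def W_def Wset_def)
    have sub: "Os \<subseteq> {0..<n} - {x}" using subW by (auto simp: Os_def onesf_def)
    have cS: "card ({0..<n} - {x}) = n - 1" using xV by simp
    have e1: "W - insert y (set_mset M) = W' - {y}" for y by (auto simp: W'_def)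
    show "(\<Sum>y\<in>{0..<n}-{x}. G (add_mset y M)) \<le> \<rho> * (real n - 1) * G M"
    proof (cases "m*(real K+1) < 2*real (card Os)")
      case True
      have GM: "G M = q ^ E M" using True by (simp add: G_def Os_def W'_def)
      have finM: "finite (set_mset M - V)" by simp
      have Emono: "E M + 1 \<le> E (add_mset y M)" for y
      proof -
        have "(\<Sum>v\<in>set_mset M - V. e v) \<le> (\<Sum>v\<in>insert y (set_mset M) - V. e v)"
          by (rule sum_mono2) auto
        then show ?thesis by (simp add: E_def)
      qed
      have "(\<Sum>y\<in>{0..<n}-{x}. G (add_mset y M)) \<le> real (card Os) * (q^2 * G M)
              + (real (card ({0..<n}-{x})) - real (card Os)) * (q * G M)"
      proof (rule sum_landing[OF _ sub])
        fix y assume y: "y \<in> Os"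
        have yn: "y \<notin> set_mset M" "y \<notin> V" "e y \<noteq> 0"
          using y by (auto simp: Os_def onesf_def W'_def W_def Wset_def)
        have "insert y (set_mset M) - V = insert y (set_mset M - V)" using yn by auto
        then have "E (add_mset y M) = E M + 1 + e y" using yn by (simp add: E_def)
        then have "E M + 2 \<le> E (add_mset y M)" using yn by simp
        then have "q ^ E (add_mset y M) \<le> q ^ (E M + 2)" using q by (intro power_decreasing) auto
        then show "G (add_mset y M) \<le> q^2 * G M"
          using Gle[of "add_mset y M"] by (simp add: GM power_add power2_eq_square mult_ac)
      next
        fix y assume y: "y \<in> {0..<n} - {x} - Os"
        have "q ^ E (add_mset y M) \<le> q ^ (E M + 1)" using q Emono by (intro power_decreasing) auto
        then show "G (add_mset y M) \<le> q * G M"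
          using Gle[of "add_mset y M"] by (simp add: GM power_add power2_eq_square mult_ac)
      qed simp
      also have "\<dots> = q * G M * ((real n - 1) - real (card Os) * (1-q))"
        using cS n by (simp add: of_nat_diff algebra_simps power2_eq_square)
      also have "\<dots> \<le> q * G M * ((real n - 1) - \<pi> * (real n - 1) * (1-q))"
      proof (intro mult_left_mono diff_left_mono mult_right_mono)
        show "\<pi> * (real n - 1) \<le> real (card Os)"
        proof -
          have "\<pi> * (real n - 1) = m*(real K+1)/2" using n by (simp add: \<pi>_def field_simps)
          then show ?thesis using True by simp
        qed
      qed (use q G0 in auto)
      also have "\<dots> = \<rho> * (real n - 1) * G M"
        by (simp add: \<rho>_def algebra_simps)
      finally show ?thesis .
    next
      case False
      have "G (add_mset y M) = 0" for y
      proof -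
        have "onesf e (W' - {y}) \<subseteq> Os" unfolding Os_def by (rule onesf_mono) auto
        then have "card (onesf e (W' - {y})) \<le> card Os"
          by (rule card_mono[rotated]) (simp add: Os_def onesf_def W'_def finW)
        then show ?thesis using False by (simp add: G_def e1)
      qed
      moreover have "G M = 0" using False by (simp add: G_def Os_def W'_def)
      ultimately show ?thesis by simp
    qed
  qed
  also have "\<dots> \<le> ennreal (p1 n K m q e s)"
  proof (rule ennreal_leI)
    have b0: "0 \<le> (1-p) + p*\<rho>" using p rho0 by simp
    have b1: "(1-p) + p*\<rho> \<le> q" using cond by (simp add: \<rho>_def \<pi>_def)
    have "((1-p) + p*\<rho>)^length xs \<le> q ^ length xs"
      by (rule power_mono[OF b1 b0])
    moreover have "G {#} = (if m*(real K+1) < 2*real (card (onesf e W)) then 1 else 0)"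
      by (simp add: G_def E_def)
    moreover have "p1 n K m q e s = (if m*(real K+1) < 2*real (card (onesf e W)) then q ^ length xs else 0)"
      by (simp add: p1_def lenA A_def W_def V_def)
    ultimately show "((1-p) + p*\<rho>)^length xs * G {#} \<le> p1 n K m q e s"
      by simp
  qed
  finally show ?thesis .
qed

definition gfun :: "nat \<Rightarrow> real \<Rightarrow> (nat \<Rightarrow> nat) \<Rightarrow> nat set \<Rightarrow> real" where
  "gfun K m e U = (if K < card U then (real (card (onesf e U)) / real (card U) - m)^2 + 1/(real K - 1) - 1/(real (card U) - 1) else 0)"

lemma gfun_nonneg:
  assumes "2 \<le> K" shows "0 \<le> gfun K m e U"
proof (cases "K < card U")
  case True
  have h: "1/(real (card U) - 1) \<le> 1/(real K - 1)"
    using True assms by (intro divide_left_mono) auto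
  have sq: "0 \<le> (real (card (onesf e U)) / real (card U) - m)^2" by simp
  have "gfun K m e U = (real (card (onesf e U)) / real (card U) - m)^2 + 1/(real K - 1) - 1/(real (card U) - 1)"
    using True by (simp add: gfun_def)
  then show ?thesis using h sq by linarith
qed (simp add: gfun_def)

lemma card_onesf_le: "finite U \<Longrightarrow> card (onesf e U) \<le> card U"
  by (rule card_mono) (auto simp: onesf_def)

lemma gfun_key:
  assumes K: "2 \<le> K" and fin: "finite U"
  shows "(\<Sum>w\<in>U. gfun K m e (U - {w})) \<le> real (card U) * gfun K m e U"
proof -
  define c where "c = card U"
  define Os where "Os = onesf e U"
  define a where "a = card Os"
  have OsU: "Os \<subseteq> U" by (auto simp: Os_def onesf_def)
  have ac: "a \<le> c" unfolding a_def c_def Os_def using card_onesf_le[OF fin] .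
  have cw: "w \<in> U \<Longrightarrow> card (U - {w}) = c - 1" for w using fin by (simp add: c_def)
  consider "c \<le> K" | "c = K + 1" | "K + 2 \<le> c" by linarith
  then show ?thesis
  proof cases
    case 1
    have z: "gfun K m e (U - {w}) = 0" for w
    proof -
      have "card (U - {w}) \<le> card U" using fin by (simp add: card_mono)
      then show ?thesis using 1 by (simp add: gfun_def c_def)
    qed
    have "(\<Sum>w\<in>U. gfun K m e (U - {w})) = 0" by (rule sum.neutral) (simp add: z)
    moreover have "gfun K m e U = 0" using 1 by (simp add: gfun_def c_def)
    ultimately show ?thesis by simp
  next
    case 2
    then have "w \<in> U \<Longrightarrow> gfun K m e (U - {w}) = 0" for w
      using cw by (simp add: gfun_def)
    then have "(\<Sum>w\<in>U. gfun K m e (U - {w})) = 0" by simp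
    then show ?thesis using gfun_nonneg[OF K] by simp
  next
    case 3
    define B where "B = 1/(real K - 1) - 1/(real c - 2)"
    have c1: "real (c - 1) = real c - 1" using 3 by simp
    have t1: "gfun K m e (U - {w}) = ((real a - 1)/(real c - 1) - m)^2 + B" if "w \<in> Os" for w
    proof -
      have "onesf e (U - {w}) = Os - {w}" by (auto simp: Os_def onesf_def)
      moreover have "card (Os - {w}) = a - 1" using that fin OsU finite_subset by (simp add: a_def)
      moreover have "real (a - 1) = real a - 1"
      proof -
        have "finite Os" using fin OsU finite_subset by blast
        then have "0 < a" using that unfolding a_def by (auto simp: card_gt_0_iff)
        then show ?thesis by (simp add: of_nat_diff)
      qed
      moreover have cU: "card (U - {w}) = c - 1" using that OsU cw by blast
      moreover have "K < c - 1" using 3 by simp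
      ultimately have "gfun K m e (U - {w}) = ((real a - 1)/real (c - 1) - m)^2 + 1/(real K - 1) - 1/(real (c - 1) - 1)"
        unfolding gfun_def by simp
      also have "real (c - 1) - 1 = real c - 2" using c1 by simp
      finally show ?thesis unfolding c1 B_def by simp
    qed
    have t0: "gfun K m e (U - {w}) = (real a/(real c - 1) - m)^2 + B" if "w \<in> U - Os" for w
    proof -
      have "onesf e (U - {w}) = Os" using that by (auto simp: Os_def onesf_def)
      moreover have cU: "card (U - {w}) = c - 1" using that cw by blast
      moreover have "K < c - 1" using 3 by simp
      ultimately have "gfun K m e (U - {w}) = (real a/real (c - 1) - m)^2 + 1/(real K - 1) - 1/(real (c - 1) - 1)"
        unfolding gfun_def a_def by simp
      also have "real (c - 1) - 1 = real c - 2" using c1 by simp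
      finally show ?thesis unfolding c1 B_def by simp
    qed
    have finO: "finite Os" using fin OsU finite_subset by blast
    have "(\<Sum>w\<in>U. gfun K m e (U - {w})) = (\<Sum>w\<in>U - Os. gfun K m e (U - {w})) + (\<Sum>w\<in>Os. gfun K m e (U - {w}))"
      using sum.subset_diff[OF OsU fin] by simp
    also have "\<dots> = real (c - a) * ((real a/(real c - 1) - m)^2 + B) + real a * (((real a - 1)/(real c - 1) - m)^2 + B)"
    proof -
      have "(\<Sum>w\<in>U - Os. gfun K m e (U - {w})) = (\<Sum>w\<in>U - Os. (real a/(real c - 1) - m)^2 + B)"
        by (rule sum.cong) (simp_all add: t0)
      moreover have "(\<Sum>w\<in>Os. gfun K m e (U - {w})) = (\<Sum>w\<in>Os. ((real a - 1)/(real c - 1) - m)^2 + B)"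
        by (rule sum.cong) (simp_all add: t1)
      moreover have "card (U - Os) = c - a" using card_Diff_subset[OF finO OsU] by (simp add: a_def c_def)
      ultimately show ?thesis by (simp add: a_def)
    qed
    also have "\<dots> = real a*((real a-1)/(real c-1) - m)^2 + (real c-real a)*(real a/(real c-1)-m)^2 + real c*B"
    proof -
      have gen: "real (c-a)*(X+B) + real a*(Y+B) = real a*Y + (real c - real a)*X + real c*B" for X Y
        using ac by (simp add: of_nat_diff algebra_simps)
      show ?thesis by (rule gen)
    qed
    also have "\<dots> \<le> real c*((real a/real c - m)^2 + 1/(real K-1) - 1/(real c-1))"
      unfolding B_def by (rule key_ineq) (use ac 3 K in auto)
    also have "\<dots> = real (card U) * gfun K m e U"
      using 3 by (simp add: gfun_def c_def a_def Os_def)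
    finally show ?thesis .
  qed
qed

definition pG :: "nat \<Rightarrow> nat \<Rightarrow> real \<Rightarrow> (nat \<Rightarrow> nat) \<Rightarrow> nat multiset \<times> nat set \<Rightarrow> real" where
  "pG n K m e s = gfun K m e (Wset n (snd s))"

lemma pG_step:
  assumes n: "2 \<le> n" and K: "2 \<le> K" and p: "0 \<le> p" "p \<le> 1" and inv: "inv_st n s"
  shows "(\<integral>\<^sup>+s'. ennreal (pG n K m e s') \<partial>frog_step p n e s) \<le> ennreal (pG n K m e s)"
proof -
  define V where "V = snd s"
  define A where "A = fst s"
  define W where "W = Wset n V"
  define xs where "xs = sorted_list_of_multiset A"
  define G where "G M = gfun K m e (W - set_mset M)" for M
  have finW: "finite W" by (simp add: W_def Wset_def)
  have G0: "0 \<le> G M" for M by (simp add: G_def gfun_nonneg[OF K])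
  have setxs: "set xs = set_mset A" by (simp add: xs_def)
  have "(\<integral>\<^sup>+s'. ennreal (pG n K m e s') \<partial>frog_step p n e s) = (\<integral>\<^sup>+M. ennreal (G M) \<partial>frog_move p n xs)"
    unfolding frog_step_integral xs_def A_def V_def[symmetric]
    by (simp add: pG_def G_def Wset_Un W_def)
  also have "\<dots> \<le> ennreal ((1 - p + p * 1)^length xs * G {#})"
  proof (rule frog_move_bound[OF n(1) p _ G0])
    show "\<forall>x\<in>set xs. x < n" using inv by (auto simp: setxs inv_st_def A_def)
  next
    fix x M assume x: "x \<in> set xs" and M: "set_mset M \<subseteq> {0..<n}"
    have xV: "x \<in> V" "x < n" using inv x by (auto simp: setxs inv_st_def A_def V_def)
    define W' where "W' = W - set_mset M"
    have subW: "W' \<subseteq> {0..<n} - {x}" using xV by (auto simp: W'_def W_def Wset_def)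
    have finW': "finite W'" using finW by (simp add: W'_def)
    have cS: "card ({0..<n} - {x}) = n - 1" using xV by simp
    have e0: "W - insert y (set_mset M) = W' - {y}" for y by (auto simp: W'_def)
    have e1: "G (add_mset y M) = gfun K m e (W' - {y})" for y
      by (simp add: G_def e0)
    have "(\<Sum>y\<in>{0..<n}-{x}. G (add_mset y M)) =
        (\<Sum>y\<in>{0..<n}-{x}-W'. G (add_mset y M)) + (\<Sum>y\<in>W'. G (add_mset y M))"
      using sum.subset_diff[OF subW] by simp
    also have "(\<Sum>y\<in>{0..<n}-{x}-W'. G (add_mset y M)) = real (card ({0..<n}-{x}-W')) * G M"
    proof -
      have "(\<Sum>y\<in>{0..<n}-{x}-W'. G (add_mset y M)) = (\<Sum>y\<in>{0..<n}-{x}-W'. G M)"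
      proof (rule sum.cong)
        fix y assume "y \<in> {0..<n}-{x}-W'"
        then have "W' - {y} = W'" by auto
        then show "G (add_mset y M) = G M" unfolding e1 by (simp add: G_def W'_def)
      qed simp
      then show ?thesis by simp
    qed
    also have "(\<Sum>y\<in>W'. G (add_mset y M)) \<le> real (card W') * G M"
    proof -
      have GW: "G M = gfun K m e W'" by (simp add: G_def W'_def)
      show ?thesis unfolding e1 GW by (rule gfun_key[OF K finW'])
    qed
    also have "real (card ({0..<n}-{x}-W')) * G M + real (card W') * G M = (real n - 1) * G M"
    proof -
      have "card ({0..<n}-{x}-W') + card W' = n - 1"
        using card_Diff_subset[OF finW' subW] card_mono[OF _ subW] cS by simp
      then have "real (card ({0..<n}-{x}-W')) + real (card W') = real n - 1"
        using n by (metis of_nat_1 of_nat_add of_nat_diff one_le_numeral order_trans)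
      then show ?thesis by (metis distrib_right)
    qed
    finally show "(\<Sum>y\<in>{0..<n}-{x}. G (add_mset y M)) \<le> 1 * (real n - 1) * G M" by simp
  qed simp
  also have "\<dots> = ennreal (pG n K m e s)"
    by (simp add: G_def pG_def W_def V_def)
  finally show ?thesis .
qed

definition bo :: "nat \<Rightarrow> real" where "bo k = (if k \<noteq> 0 then 1 else 0)"

lemma bo_sq: "bo k * bo k = bo k" by (simp add: bo_def)
lemma bo_ge: "0 \<le> bo k" "bo k \<le> 1" by (auto simp: bo_def)

lemma pmf_intg: "(\<And>x. \<bar>f x\<bar> \<le> c) \<Longrightarrow> integrable (measure_pmf P) (f :: 'a \<Rightarrow> real)"
  by (intro measure_pmf.integrable_const_bound[where B=c]) auto

lemma Pi_E1:
  fixes f :: "'b \<Rightarrow> real"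
  assumes "finite A" "v \<in> A"
  shows "(\<integral>e. f (e v) \<partial>Pi_pmf A dflt (\<lambda>_. D)) = (\<integral>k. f k \<partial>D)"
proof -
  have "(\<integral>e. f (e v) \<partial>Pi_pmf A dflt (\<lambda>_. D)) = (\<integral>k. f k \<partial>map_pmf (\<lambda>e. e v) (Pi_pmf A dflt (\<lambda>_. D)))"
    by simp
  also have "map_pmf (\<lambda>e. e v) (Pi_pmf A dflt (\<lambda>_. D)) = D"
    using Pi_pmf_component[OF assms(1), of v dflt "\<lambda>_. D"] assms(2) by simp
  finally show ?thesis .
qed

lemma Pi_E2:
  fixes f :: "nat \<Rightarrow> real"
  assumes "finite A" "v \<in> A" "w \<in> A" "v \<noteq> w" "\<And>k. 0 \<le> f k" "\<And>k. f k \<le> 1"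
  shows "(\<integral>e. f (e v) * f (e w) \<partial>Pi_pmf A dflt (\<lambda>_. D)) = (\<integral>k. f k \<partial>D) * (\<integral>k. f k \<partial>D)"
proof -
  define g where "g x k = (if x = v \<or> x = w then f k else 1)" for x k
  have pe: "(\<Prod>x\<in>A. g x (e x)) = f (e v) * f (e w)" for e
  proof -
    have "(\<Prod>x\<in>A. g x (e x)) = (\<Prod>x\<in>{v,w}. g x (e x))"
      using assms by (intro prod.mono_neutral_right) (auto simp: g_def)
    then show ?thesis using assms(4) by (simp add: g_def)
  qed
  have "(\<integral>e. (\<Prod>x\<in>A. g x (e x)) \<partial>Pi_pmf A dflt (\<lambda>_. D)) = (\<Prod>x\<in>A. \<integral>k. g x k \<partial>D)"
  proof (rule expectation_prod_Pi_pmf[OF assms(1)])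
    fix x assume "x \<in> A"
    show "integrable (measure_pmf D) (g x)"
      by (rule pmf_intg[where c=1]) (use assms(5,6) in \<open>auto simp: g_def abs_le_iff intro: order_trans[of _ 0]\<close>)
  qed (use assms(5) in \<open>auto simp: g_def\<close>)
  also have "(\<Prod>x\<in>A. \<integral>k. g x k \<partial>D) = (\<Prod>x\<in>{v,w}. \<integral>k. g x k \<partial>D)"
    using assms by (intro prod.mono_neutral_right) (auto simp: g_def)
  also have "\<dots> = (\<integral>k. f k \<partial>D) * (\<integral>k. f k \<partial>D)" using assms(4) by (simp add: g_def)
  finally show ?thesis by (simp add: pe)
qed

lemma var_bound:
  fixes D :: "nat pmf"
  assumes n: "2 \<le> n"
  shows "(\<integral>e. ((\<Sum>v\<in>{0..<n} - {0}. bo (e v))/(real n - 1) - (\<integral>k. bo k \<partial>D))^2 \<partial>Pi_pmf {0..<n} 0 (\<lambda>_. D))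
         \<le> 1/(real n - 1)"
proof -
  define P where "P = Pi_pmf {0..<n} 0 (\<lambda>_. D)"
  define m where "m = (\<integral>k. bo k \<partial>D)"
  define B where "B = {0..<n} - {0::nat}"
  define N where "N = real n - 1"
  define S where "S e = (\<Sum>v\<in>B. bo (e v))" for e :: "nat \<Rightarrow> nat"
  have finB: "finite B" by (simp add: B_def)
  have cB: "real (card B) = N" using n by (simp add: B_def N_def of_nat_diff)
  have N0: "N > 0" using n by (simp add: N_def)
  have BA: "B \<subseteq> {0..<n}" by (auto simp: B_def)
  have intD: "integrable (measure_pmf D) bo" by (rule pmf_intg[where c=1]) (simp add: bo_def)
  have m0: "0 \<le> m" unfolding m_def by (intro integral_nonneg_AE) (simp add: bo_ge)
  have m1: "m \<le> 1"
  proof -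
    have "m \<le> (\<integral>k. 1 \<partial>D)" unfolding m_def
      by (intro integral_mono intD) (auto simp: bo_ge)
    then show ?thesis by simp
  qed
  have Sb: "\<bar>S e\<bar> \<le> real (card B)" for e
  proof -
    have "0 \<le> S e" unfolding S_def by (intro sum_nonneg) (simp add: bo_ge)
    moreover have "S e \<le> (\<Sum>v\<in>B. 1)" unfolding S_def by (intro sum_mono) (simp add: bo_ge)
    ultimately show ?thesis by simp
  qed
  have iS: "integrable P S" by (rule pmf_intg[OF Sb])
  have iSS: "integrable P (\<lambda>e. S e * S e)"
    by (rule pmf_intg[where c="real (card B) * real (card B)"]) (unfold abs_mult, rule mult_mono[OF Sb Sb], auto)
  have ib: "integrable P (\<lambda>e. bo (e v))" for v by (rule pmf_intg[where c=1]) (simp add: bo_def)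
  have ibb: "integrable P (\<lambda>e. bo (e v) * bo (e w))" for v w by (rule pmf_intg[where c=1]) (simp add: bo_def)
  have E1: "v \<in> B \<Longrightarrow> (\<integral>e. bo (e v) \<partial>P) = m" for v
    unfolding P_def m_def using BA by (rule_tac Pi_E1[where f=bo]) auto
  have E2: "v \<in> B \<Longrightarrow> w \<in> B \<Longrightarrow> v \<noteq> w \<Longrightarrow> (\<integral>e. bo (e v) * bo (e w) \<partial>P) = m * m" for v w
    unfolding P_def m_def using BA by (rule_tac Pi_E2[where f=bo]) (auto simp: bo_ge)
  have ES: "(\<integral>e. S e \<partial>P) = N * m"
  proof -
    have "(\<integral>e. S e \<partial>P) = (\<Sum>v\<in>B. \<integral>e. bo (e v) \<partial>P)"
      unfolding S_def by (rule Bochner_Integration.integral_sum[where f="\<lambda>v e. bo (e v)"]) (rule ib)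
    also have "\<dots> = (\<Sum>v\<in>B. m)" by (rule sum.cong) (simp_all add: E1)
    finally show ?thesis using cB by simp
  qed
  have ESS: "(\<integral>e. S e * S e \<partial>P) = N * m + N * (N - 1) * (m * m)"
  proof -
    have sq: "(\<lambda>e. S e * S e) = (\<lambda>e. \<Sum>v\<in>B. \<Sum>w\<in>B. bo (e v) * bo (e w))"
      unfolding S_def by (simp add: sum_product)
    have "(\<integral>e. S e * S e \<partial>P) = (\<Sum>v\<in>B. \<integral>e. (\<Sum>w\<in>B. bo (e v) * bo (e w)) \<partial>P)"
      unfolding sq by (subst Bochner_Integration.integral_sum) (auto intro!: integrable_sum ibb)
    also have "\<dots> = (\<Sum>v\<in>B. \<Sum>w\<in>B. \<integral>e. bo (e v) * bo (e w) \<partial>P)"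
      by (rule sum.cong[OF refl], rule Bochner_Integration.integral_sum[where f="\<lambda>w e. bo (e v) * bo (e w)" for v], rule ibb)
    also have "\<dots> = (\<Sum>v\<in>B. m + (N - 1) * (m * m))"
    proof (rule sum.cong)
      fix v assume v: "v \<in> B"
      have "(\<Sum>w\<in>B. \<integral>e. bo (e v) * bo (e w) \<partial>P) =
            (\<integral>e. bo (e v) * bo (e v) \<partial>P) + (\<Sum>w\<in>B - {v}. \<integral>e. bo (e v) * bo (e w) \<partial>P)"
        using v finB by (simp add: sum.remove)
      also have "(\<integral>e. bo (e v) * bo (e v) \<partial>P) = m" using E1[OF v] by (simp add: bo_sq)
      also have "(\<Sum>w\<in>B - {v}. \<integral>e. bo (e v) * bo (e w) \<partial>P) = (\<Sum>w\<in>B - {v}. m * m)"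
        by (rule sum.cong) (use v E2 in auto)
      also have "\<dots> = (N - 1) * (m * m)"
      proof -
        have "0 < card B" using v finB by (auto simp: card_gt_0_iff)
        then have "real (card (B - {v})) = N - 1" using v finB cB by (simp add: of_nat_diff)
        then show ?thesis by simp
      qed
      finally show "(\<Sum>w\<in>B. \<integral>e. bo (e v) * bo (e w) \<partial>P) = m + (N - 1) * (m * m)" .
    qed simp
    also have "\<dots> = N * (m + (N - 1) * (m * m))" using cB by simp
    finally show ?thesis by (simp add: algebra_simps)
  qed
  have eqf: "(\<lambda>e. (S e / N - m)^2) = (\<lambda>e. (1/(N*N)) * (S e * S e) - (2*m/N) * S e + m*m)"
    using N0 by (auto simp: fun_eq_iff power2_eq_square field_simps)
  have "(\<integral>e. (S e / N - m)^2 \<partial>P) = (1/(N*N)) * (N * m + N * (N - 1) * (m * m)) - (2*m/N) * (N * m) + m*m"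
  proof -
    have i1: "integrable P (\<lambda>e. (1/(N*N)) * (S e * S e))" using iSS by simp
    have i2: "integrable P (\<lambda>e. (2*m/N) * S e)" using iS by simp
    have "(\<integral>e. (1/(N*N)) * (S e * S e) - (2*m/N) * S e + m*m \<partial>P)
        = (\<integral>e. (1/(N*N)) * (S e * S e) - (2*m/N) * S e \<partial>P) + (\<integral>e. m*m \<partial>P)"
      by (rule Bochner_Integration.integral_add) (use i1 i2 in auto)
    also have "(\<integral>e. (1/(N*N)) * (S e * S e) - (2*m/N) * S e \<partial>P)
        = (\<integral>e. (1/(N*N)) * (S e * S e) \<partial>P) - (\<integral>e. (2*m/N) * S e \<partial>P)"
      by (rule Bochner_Integration.integral_diff[OF i1 i2])
    also have "(\<integral>e. (1/(N*N)) * (S e * S e) \<partial>P) = (1/(N*N)) * (\<integral>e. S e * S e \<partial>P)"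
      by (rule integral_mult_right_zero)
    also have "(\<integral>e. (2*m/N) * S e \<partial>P) = (2*m/N) * (\<integral>e. S e \<partial>P)"
      by (rule integral_mult_right_zero)
    finally show ?thesis unfolding eqf ES ESS by simp
  qed
  also have "\<dots> = m * (1 - m) / N" using N0 by (simp add: field_simps)
  also have "\<dots> \<le> 1 / N"
    using m0 m1 N0 by (intro divide_right_mono) (auto intro: mult_le_one)
  finally have "(\<integral>e. (S e / N - m)^2 \<partial>P) \<le> 1 / N" .
  then show ?thesis by (simp only: P_def S_def B_def N_def m_def)
qed

definition Bad :: "nat \<Rightarrow> real \<Rightarrow> (nat multiset \<times> nat set) set" where
  "Bad n \<epsilon> = {s. real (card (snd s)) < (1-\<epsilon>) * real n}"

lemma card_onesf_sum: "finite U \<Longrightarrow> real (card (onesf e U)) = (\<Sum>v\<in>U. bo (e v))"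
proof -
  assume fin: "finite U"
  have "real (card (onesf e U)) = (\<Sum>v\<in>{v\<in>U. e v \<noteq> 0}. (1::real))"
    unfolding onesf_def by (simp only: card_eq_sum of_nat_sum of_nat_1)
  also have "\<dots> = (\<Sum>v\<in>U. if e v \<noteq> 0 then 1 else 0)" using fin by (rule sum.inter_filter)
  finally show ?thesis by (simp add: bo_def)
qed

lemma bad_pointwise:
  assumes n: "2 \<le> n" and K: "2 \<le> K" and Kn: "real K \<le> \<epsilon> * real n" and m: "0 < m"
    and q: "0 \<le> q" and inv: "inv_st n s" and bad: "s \<in> Bad n \<epsilon>"
  shows "1 \<le> pA n K s + p1 n K m q e s + (4/m^2) * pG n K m e s"
proof -
  define W where "W = Wset n (snd s)"
  have sub: "snd s \<subseteq> {0..<n}" using inv by (simp add: inv_st_def)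
  have finV: "finite (snd s)" using sub finite_subset by blast
  have cW: "card W = n - card (snd s)" unfolding W_def Wset_def
    using card_Diff_subset[OF finV sub] by simp
  have cV: "card (snd s) \<le> n" using card_mono[OF _ sub] by simp
  have "real (card W) = real n - real (card (snd s))" using cW cV by (simp add: of_nat_diff)
  then have cWr: "real (card W) > \<epsilon> * real n" using bad by (simp add: Bad_def algebra_simps)
  then have KW: "K < card W" using Kn by linarith
  have A0: "0 \<le> pA n K s" by (rule pA_nonneg)
  have P10: "0 \<le> p1 n K m q e s" using q by (rule p1_nonneg)
  have G0: "0 \<le> pG n K m e s" unfolding pG_def by (rule gfun_nonneg[OF K])
  show ?thesis
  proof (cases "fst s \<noteq> {#}")
    case True
    then have "pA n K s = 2 ^ card W" using KW by (simp add: pA_def W_def)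
    then have "1 \<le> pA n K s" by simp
    then show ?thesis using P10 G0 m by (simp add: add_increasing2)
  next
    case False
    show ?thesis
    proof (cases "m*(real K+1) < 2*real (card (onesf e W))")
      case True
      then have "p1 n K m q e s = 1" using False by (simp add: p1_def W_def)
      then show ?thesis using A0 G0 m by simp
    next
      case False2: False
      define c where "c = real (card W)"
      define a where "a = real (card (onesf e W))"
      have c0: "c > 0" using KW by (simp add: c_def)
      have "real K + 1 \<le> c" using KW by (simp add: c_def)
      then have "2 * a \<le> m * c" using False2 m by (simp add: a_def) (smt (verit) mult_left_mono)
      then have ac: "a / c \<le> m / 2" using c0 by (simp add: field_simps)
      have a0: "0 \<le> a / c" using c0 by (simp add: a_def)
      have "m^2/4 \<le> (a/c - m)^2"
      proof -
        have "m/2 \<le> m - a/c" using ac by simp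
        then have "(m/2)^2 \<le> (m - a/c)^2" using m by (intro power_mono) auto
        then show ?thesis by (simp add: power2_eq_square algebra_simps)
      qed
      moreover have "pG n K m e s = (a/c - m)^2 + 1/(real K - 1) - 1/(c - 1)"
        using KW by (simp add: pG_def gfun_def a_def c_def W_def)
      moreover have "1/(c - 1) \<le> 1/(real K - 1)"
        using KW K by (intro divide_left_mono) (auto simp: c_def)
      ultimately have "m^2/4 \<le> pG n K m e s" by linarith
      then have "1 \<le> (4/m^2) * pG n K m e s" using m by (simp add: field_simps)
      then show ?thesis using A0 P10 by linarith
    qed
  qed
qed

lemma pA_start: "pA n K (frog_start e) \<le> 2 ^ n"
proof -
  have "card (Wset n (snd (frog_start e))) \<le> n"
    using card_mono[of "{0..<n}" "Wset n {0}"] by (auto simp: frog_start_def Wset_def)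
  then show ?thesis by (auto simp: pA_def intro: power_increasing)
qed

lemma p1_start: "0 \<le> q \<Longrightarrow> q \<le> 1 \<Longrightarrow> p1 n K m q e (frog_start e) \<le> q"
  by (auto simp: p1_def frog_start_def intro!: mult_left_le power_le_one)

lemma state_bad_bound:
  assumes n: "2 \<le> n" and K: "2 \<le> K" and Kn: "real K \<le> \<epsilon> * real n" and Kn1: "K + 1 \<le> n"
    and p: "0 \<le> p" "p \<le> 1" and m: "0 < m" "m \<le> 1" and q: "0 \<le> q" "q \<le> 1"
    and cond: "(1-p) + p*(q*(1 - m*(real K+1)/(2*(real n-1))*(1-q))) \<le> q"
  shows "emeasure (frog_state p n e t) (Bad n \<epsilon>) \<le>
     ennreal (((1-p) + p*(1 - (real K+1)/(2*(real n-1))))^t * 2^n + q + (4/m^2) * pG n K m e (frog_start e))"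
proof -
  define \<gamma> where "\<gamma> = (1-p) + p*(1 - (real K+1)/(2*(real n-1)))"
  define c where "c = 4/m^2"
  have c0: "0 \<le> c" by (simp add: c_def)
  have g0: "0 \<le> \<gamma>"
  proof -
    have "(real K+1)/(2*(real n-1)) \<le> 1" using Kn1 n by (simp add: field_simps)
    then show ?thesis using p unfolding \<gamma>_def by (simp add: mult_nonneg_nonneg)
  qed
  let ?D = "frog_state p n e t"
  have "emeasure ?D (Bad n \<epsilon>) = (\<integral>\<^sup>+s. indicator (Bad n \<epsilon>) s \<partial>?D)" by simp
  also have "\<dots> \<le> (\<integral>\<^sup>+s. ennreal (pA n K s) + ennreal (p1 n K m q e s) + ennreal c * ennreal (pG n K m e s) \<partial>?D)"
  proof (rule nn_integral_mono_AE, rule AE_pmfI)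
    fix s assume "s \<in> set_pmf ?D"
    then have inv: "inv_st n s" by (rule frog_state_support[OF n])
    show "indicator (Bad n \<epsilon>) s \<le> ennreal (pA n K s) + ennreal (p1 n K m q e s) + ennreal c * ennreal (pG n K m e s)"
    proof (cases "s \<in> Bad n \<epsilon>")
      case True
      have "1 \<le> pA n K s + p1 n K m q e s + c * pG n K m e s"
        unfolding c_def by (rule bad_pointwise[OF n K Kn m(1) q(1) inv True])
      then have "ennreal 1 \<le> ennreal (pA n K s + p1 n K m q e s + c * pG n K m e s)"
        by (rule ennreal_leI)
      also have "\<dots> = ennreal (pA n K s) + ennreal (p1 n K m q e s) + ennreal c * ennreal (pG n K m e s)"
        using pA_nonneg[of n K s] p1_nonneg[OF q(1)] gfun_nonneg[OF K] c0
        by (simp add: ennreal_plus ennreal_mult pG_def add_nonneg_nonneg)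
      finally show ?thesis using True by simp
    qed simp
  qed
  also have "\<dots> = (\<integral>\<^sup>+s. ennreal (pA n K s) \<partial>?D) + (\<integral>\<^sup>+s. ennreal (p1 n K m q e s) \<partial>?D)
      + ennreal c * (\<integral>\<^sup>+s. ennreal (pG n K m e s) \<partial>?D)"
    by (simp add: nn_integral_add nn_integral_cmult)
  also have "\<dots> \<le> ennreal \<gamma> ^ t * ennreal (pA n K (frog_start e)) + 1 ^ t * ennreal (p1 n K m q e (frog_start e))
      + ennreal c * (1 ^ t * ennreal (pG n K m e (frog_start e)))"
  proof (intro add_mono mult_left_mono order_refl)
    show "(\<integral>\<^sup>+s. ennreal (pA n K s) \<partial>?D) \<le> ennreal \<gamma> ^ t * ennreal (pA n K (frog_start e))"
      by (rule frog_state_iter[OF n]) (unfold \<gamma>_def, rule pA_step[OF n Kn1 p])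
    show "(\<integral>\<^sup>+s. ennreal (p1 n K m q e s) \<partial>?D) \<le> 1 ^ t * ennreal (p1 n K m q e (frog_start e))"
      by (rule frog_state_iter[OF n]) (simp add: p1_step[OF n Kn1 p q order.strict_implies_order[OF m(1)] m(2) cond])
    show "(\<integral>\<^sup>+s. ennreal (pG n K m e s) \<partial>?D) \<le> 1 ^ t * ennreal (pG n K m e (frog_start e))"
      by (rule frog_state_iter[OF n]) (simp add: pG_step[OF n K p])
  qed simp
  also have "\<dots> \<le> ennreal (\<gamma>^t * 2^n) + ennreal q + ennreal c * ennreal (pG n K m e (frog_start e))"
  proof (intro add_mono order_refl)
    show "ennreal \<gamma> ^ t * ennreal (pA n K (frog_start e)) \<le> ennreal (\<gamma>^t * 2^n)"
      using g0 pA_start[of n K e] pA_nonneg[of n K "frog_start e"]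
      by (simp add: ennreal_power ennreal_mult[symmetric] mult_left_mono ennreal_leI)
    show "1 ^ t * ennreal (p1 n K m q e (frog_start e)) \<le> ennreal q"
      using p1_start[OF q, of n K m e] by (simp add: ennreal_leI)
  qed simp
  also have "\<dots> = ennreal (\<gamma>^t * 2^n + q + c * pG n K m e (frog_start e))"
    using g0 q c0 gfun_nonneg[OF K]
    by (simp add: ennreal_plus ennreal_mult pG_def add_nonneg_nonneg)
  finally show ?thesis by (simp add: \<gamma>_def c_def)
qed

lemma m_bounds:
  fixes D :: "nat pmf"
  shows "0 \<le> (\<integral>k. bo k \<partial>D)" "(\<integral>k. bo k \<partial>D) \<le> 1"
proof -
  have intD: "integrable (measure_pmf D) bo" by (rule pmf_intg[where c=1]) (simp add: bo_def)
  show "0 \<le> (\<integral>k. bo k \<partial>D)" by (intro integral_nonneg_AE) (simp add: bo_ge)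
  have "(\<integral>k. bo k \<partial>D) \<le> (\<integral>k. 1 \<partial>D)"
    by (intro integral_mono intD) (auto simp: bo_ge)
  then show "(\<integral>k. bo k \<partial>D) \<le> 1" by simp
qed

lemma pG_start:
  assumes n: "2 \<le> n" and K: "2 \<le> K"
  shows "pG n K m e (frog_start e) \<le> ((\<Sum>v\<in>{0..<n} - {0}. bo (e v))/(real n - 1) - m)^2 + 1/(real K - 1)"
proof -
  define W where "W = {0..<n} - {0::nat}"
  have W: "Wset n (snd (frog_start e)) = W" by (simp add: frog_start_def Wset_def W_def)
  have cW: "card W = n - 1" using n by (simp add: W_def)
  have rc: "real (card W) = real n - 1" using cW n by (simp add: of_nat_diff)
  have o: "real (card (onesf e W)) = (\<Sum>v\<in>W. bo (e v))" by (rule card_onesf_sum) (simp add: W_def)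
  have K1: "0 < real K - 1" using K by simp
  show ?thesis
  proof (cases "K < card W")
    case True
    have "0 \<le> 1/(real (card W) - 1)" using True K by simp
    moreover have "pG n K m e (frog_start e) = ((\<Sum>v\<in>W. bo (e v))/(real n - 1) - m)^2 + 1/(real K - 1) - 1/(real (card W) - 1)"
      unfolding pG_def W using True by (simp add: gfun_def o rc)
    ultimately show ?thesis by (simp add: W_def)
  next
    case False
    then have "pG n K m e (frog_start e) = 0" unfolding pG_def W by (simp add: gfun_def)
    then show ?thesis using K1 by simp
  qed
qed

lemma time_bad_bound:
  assumes n: "2 \<le> n" and K: "2 \<le> K" and Kn: "real K \<le> \<epsilon> * real n" and Kn1: "K + 1 \<le> n"
    and p: "0 \<le> p" "p \<le> 1" and mdef: "m = (\<integral>k. bo k \<partial>map_pmf the_enat eta)" and m: "0 < m"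
    and q: "0 \<le> q" "q \<le> 1"
    and cond: "(1-p) + p*(q*(1 - m*(real K+1)/(2*(real n-1))*(1-q))) \<le> q"
  shows "measure (frog_time eta p n t) (Bad n \<epsilon>) \<le>
     ((1-p) + p*(1 - (real K+1)/(2*(real n-1))))^t * 2^n + q + (4/m^2) * (1/(real n - 1) + 1/(real K - 1))"
proof -
  define \<gamma> where "\<gamma> = (1-p) + p*(1 - (real K+1)/(2*(real n-1)))"
  define c where "c = 4/m^2"
  define X where "X e = ((\<Sum>v\<in>{0..<n} - {0}. bo (e v))/(real n - 1) - m)^2" for e :: "nat \<Rightarrow> nat"
  define P where "P = frog_init eta n"
  have c0: "0 \<le> c" by (simp add: c_def)
  have m1: "m \<le> 1" unfolding mdef by (rule m_bounds(2))
  have g0: "0 \<le> \<gamma>"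
  proof -
    have "(real K+1)/(2*(real n-1)) \<le> 1" using Kn1 n by (simp add: field_simps)
    then show ?thesis using p unfolding \<gamma>_def by (simp add: mult_nonneg_nonneg)
  qed
  have K1: "0 < real K - 1" using K by simp
  have X0: "0 \<le> X e" for e by (simp add: X_def)
  have X1: "\<bar>X e\<bar> \<le> 1" for e
  proof -
    have s0: "0 \<le> (\<Sum>v\<in>{0..<n} - {0}. bo (e v))" by (intro sum_nonneg) (simp add: bo_ge)
    have "(\<Sum>v\<in>{0..<n} - {0}. bo (e v)) \<le> (\<Sum>v\<in>{0..<n} - {0::nat}. 1)" by (intro sum_mono) (simp add: bo_ge)
    also have "\<dots> = real n - 1" using n by (simp add: of_nat_diff)
    finally have s1: "(\<Sum>v\<in>{0..<n} - {0}. bo (e v)) / (real n - 1) \<le> 1" using n by simp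
    have s0': "0 \<le> (\<Sum>v\<in>{0..<n} - {0}. bo (e v)) / (real n - 1)" using s0 n by simp
    have "\<bar>(\<Sum>v\<in>{0..<n} - {0}. bo (e v)) / (real n - 1) - m\<bar> \<le> 1" using s0' s1 m m1 by linarith
    then have "((\<Sum>v\<in>{0..<n} - {0}. bo (e v)) / (real n - 1) - m)^2 \<le> 1" by (simp add: abs_square_le_1)
    then show ?thesis using X0[of e] by (simp add: X_def)
  qed
  have iX: "integrable (measure_pmf P) X" by (rule pmf_intg[OF X1])
  have EX: "(\<integral>e. X e \<partial>P) \<le> 1/(real n - 1)"
    unfolding X_def P_def frog_init_def mdef by (rule var_bound[OF n])
  have "emeasure (frog_time eta p n t) (Bad n \<epsilon>) = (\<integral>\<^sup>+e. emeasure (frog_state p n e t) (Bad n \<epsilon>) \<partial>P)"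
    by (simp add: frog_time_def P_def)
  also have "\<dots> \<le> (\<integral>\<^sup>+e. ennreal (\<gamma>^t * 2^n + q + c * (1/(real K - 1))) + ennreal c * ennreal (X e) \<partial>P)"
  proof (rule nn_integral_mono)
    fix e
    have "emeasure (frog_state p n e t) (Bad n \<epsilon>) \<le> ennreal (\<gamma>^t * 2^n + q + c * pG n K m e (frog_start e))"
      unfolding \<gamma>_def c_def by (rule state_bad_bound[OF n K Kn Kn1 p m m1 q cond])
    also have "\<dots> \<le> ennreal (\<gamma>^t * 2^n + q + c * (1/(real K - 1)) + c * X e)"
    proof (rule ennreal_leI)
      have h: "c * pG n K m e (frog_start e) \<le> c * (X e + 1/(real K - 1))"
        unfolding X_def by (rule mult_left_mono[OF pG_start[OF n K] c0])
      then show "\<gamma>^t * 2^n + q + c * pG n K m e (frog_start e) \<le> \<gamma>^t * 2^n + q + c * (1/(real K - 1)) + c * X e"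
        by (simp add: distrib_left)
    qed
    also have "\<dots> = ennreal (\<gamma>^t * 2^n + q + c * (1/(real K - 1))) + ennreal c * ennreal (X e)"
      using g0 q c0 K1 X0[of e] by (simp add: ennreal_plus ennreal_mult add_nonneg_nonneg)
    finally show "emeasure (frog_state p n e t) (Bad n \<epsilon>) \<le> \<dots>" .
  qed
  also have "\<dots> = ennreal (\<gamma>^t * 2^n + q + c * (1/(real K - 1))) + ennreal c * (\<integral>\<^sup>+e. ennreal (X e) \<partial>P)"
    by (simp add: nn_integral_add nn_integral_cmult)
  also have "(\<integral>\<^sup>+e. ennreal (X e) \<partial>P) = ennreal (\<integral>e. X e \<partial>P)"
    by (rule nn_integral_eq_integral[OF iX]) (simp add: X0)
  also have "ennreal (\<gamma>^t * 2^n + q + c * (1/(real K - 1))) + ennreal c * ennreal (\<integral>e. X e \<partial>P)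
      \<le> ennreal (\<gamma>^t * 2^n + q + c * (1/(real K - 1))) + ennreal c * ennreal (1/(real n - 1))"
    using g0 c0 by (intro add_mono order_refl mult_left_mono ennreal_leI EX) auto
  also have "\<dots> = ennreal (\<gamma>^t * 2^n + q + c * (1/(real n - 1) + 1/(real K - 1)))"
  proof -
    have A0: "0 \<le> \<gamma>^t * 2^n + q + c * (1/(real K - 1))" using g0 q c0 K1 by simp
    have B0: "0 \<le> 1/(real n - 1)" using n by simp
    have "ennreal (\<gamma>^t * 2^n + q + c * (1/(real K - 1))) + ennreal c * ennreal (1/(real n - 1))
        = ennreal ((\<gamma>^t * 2^n + q + c * (1/(real K - 1))) + c * (1/(real n - 1)))"
      by (simp only: ennreal_plus[OF A0 mult_nonneg_nonneg[OF c0 B0]] ennreal_mult[OF c0 B0])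
    also have "(\<gamma>^t * 2^n + q + c * (1/(real K - 1))) + c * (1/(real n - 1))
        = \<gamma>^t * 2^n + q + c * (1/(real n - 1) + 1/(real K - 1))"
      by (simp add: distrib_left)
    finally show ?thesis .
  qed
  finally have le: "emeasure (frog_time eta p n t) (Bad n \<epsilon>) \<le> ennreal (\<gamma>^t * 2^n + q + c * (1/(real n - 1) + 1/(real K - 1)))" .
  have T0: "0 \<le> \<gamma>^t * 2^n + q + c * (1/(real n - 1) + 1/(real K - 1))"
    using g0 q c0 K1 n by simp
  have "measure (frog_time eta p n t) (Bad n \<epsilon>) \<le> \<gamma>^t * 2^n + q + c * (1/(real n - 1) + 1/(real K - 1))"
    using le unfolding measure_pmf.emeasure_eq_measure by (simp only: ennreal_le_iff[OF T0])
  then show ?thesis by (simp only: \<gamma>_def c_def)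
qed

lemma prob_ge_lower:
  assumes n: "2 \<le> n" and K: "2 \<le> K" and Kn: "real K \<le> \<epsilon> * real n" and Kn1: "K + 1 \<le> n"
    and p: "0 < p" "p < 1" and inf: "pmf eta \<infinity> = 0"
    and mdef: "m = (\<integral>k. bo k \<partial>map_pmf the_enat eta)" and m: "0 < m"
    and q: "0 \<le> q" "q \<le> 1"
    and cond: "(1-p) + p*(q*(1 - m*(real K+1)/(2*(real n-1))*(1-q))) \<le> q"
  shows "1 - (1/real n + q + (4/m^2) * (1/(real n - 1) + 1/(real K - 1))) \<le> frog_prob_ge eta p n ((1-\<epsilon>) * real n)"
proof -
  define \<gamma> where "\<gamma> = (1-p) + p*(1 - (real K+1)/(2*(real n-1)))"
  define R where "R = q + (4/m^2) * (1/(real n - 1) + 1/(real K - 1))"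
  have g0: "0 \<le> \<gamma>"
  proof -
    have "(real K+1)/(2*(real n-1)) \<le> 1" using Kn1 n by (simp add: field_simps)
    then show ?thesis using p unfolding \<gamma>_def by (simp add: mult_nonneg_nonneg)
  qed
  have g1: "\<gamma> < 1"
  proof -
    have "0 < (real K+1)/(2*(real n-1))" using n by simp
    then have "0 < p * ((real K+1)/(2*(real n-1)))" using p(1) by (intro mult_pos_pos)
    then show ?thesis unfolding \<gamma>_def by (simp add: algebra_simps)
  qed
  have "(\<lambda>t. \<gamma>^t) \<longlonglongrightarrow> 0" using g0 g1 by (intro LIMSEQ_power_zero) simp
  moreover have "0 < 1 / (real n * 2^n)" using n by simp
  ultimately have "eventually (\<lambda>t. \<gamma>^t < 1 / (real n * 2^n)) sequentially"
    by (rule order_tendstoD(2))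
  then obtain t where t: "\<gamma>^t < 1 / (real n * 2^n)" by (auto simp: eventually_sequentially)
  have t2: "\<gamma>^t * 2^n \<le> 1 / real n"
    using t n by (simp add: field_simps)
  define f where "f t = measure_pmf.prob (frog_time eta p n t) {s. (1-\<epsilon>) * real n \<le> real (card (snd s))}" for t
  have set_eq: "{s. (1-\<epsilon>) * real n \<le> real (card (snd s))} = space (measure_pmf (frog_time eta p n t)) - Bad n \<epsilon>"
    by (auto simp: Bad_def)
  have "f t = 1 - measure_pmf.prob (frog_time eta p n t) (Bad n \<epsilon>)"
    unfolding f_def set_eq by (rule measure_pmf.prob_compl) simp
  also have "\<dots> \<ge> 1 - (\<gamma>^t * 2^n + R)"
    using time_bad_bound[OF n K Kn Kn1 order.strict_implies_order[OF p(1)] order.strict_implies_order[OF p(2)] mdef m q cond, of t]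
    by (simp add: \<gamma>_def R_def)
  finally have ft: "1 - (1/real n + R) \<le> f t" using t2 by linarith
  have bdd: "bdd_above (range f)"
    by (rule bdd_aboveI[where M=1]) (auto simp: f_def)
  have "f t \<le> (SUP t. f t)" by (rule cSUP_upper[OF _ bdd]) simp
  moreover have "frog_prob_ge eta p n ((1-\<epsilon>) * real n) = (SUP t. f t)"
    using inf p by (simp add: frog_prob_ge_def f_def)
  ultimately show ?thesis using ft by (simp add: R_def)
qed

lemma frog_prob_ge_le1: "frog_prob_ge eta p n x \<le> 1"
proof -
  have "(SUP t. measure_pmf.prob (frog_time eta p n t) {s. x \<le> real (card (snd s))}) \<le> 1"
    by (rule cSUP_least) auto
  then show ?thesis by (simp add: frog_prob_ge_def)
qed

lemma m_pos:
  assumes "pmf eta 0 < 1" "pmf eta \<infinity> = 0"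
  shows "0 < (\<integral>k. bo k \<partial>map_pmf the_enat eta)"
proof -
  have bo_ind: "bo = indicator {k. k \<noteq> 0}" by (auto simp: bo_def fun_eq_iff)
  have "(\<integral>k. bo k \<partial>map_pmf the_enat eta) = measure_pmf.prob (map_pmf the_enat eta) {k. k \<noteq> 0}"
    unfolding bo_ind by simp
  also have "\<dots> = measure_pmf.prob eta (the_enat -` {k. k \<noteq> 0})" by (simp add: measure_map_pmf)
  also have "\<dots> \<ge> measure_pmf.prob eta (UNIV - {0, \<infinity>})"
  proof (rule measure_pmf.finite_measure_mono)
    show "UNIV - {0, \<infinity>} \<subseteq> the_enat -` {k. k \<noteq> 0}"
    proof
      fix x :: enat assume "x \<in> UNIV - {0, \<infinity>}"
      then obtain k where "x = enat k" "k \<noteq> 0" by (cases x) (auto simp: zero_enat_def)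
      then show "x \<in> the_enat -` {k. k \<noteq> 0}" by simp
    qed
  qed simp
  moreover have "measure_pmf.prob eta (UNIV - {0, \<infinity>}) = 1 - measure_pmf.prob eta {0, \<infinity>}"
    using measure_pmf.prob_compl[of "{0, \<infinity>}" eta] by simp
  moreover have "measure_pmf.prob eta {0, \<infinity>} = pmf eta 0 + pmf eta \<infinity>"
    by (subst measure_measure_pmf_finite) auto
  ultimately show ?thesis using assms by linarith
qed

lemma q_cond:
  fixes p \<pi> :: real
  assumes "0 < p" "p \<le> 1" "0 < \<pi>"
  defines "q \<equiv> min 1 ((1-p)/(p*\<pi>))"
  shows "0 \<le> q" "q \<le> 1" "(1-p) + p*(q*(1 - \<pi>*(1-q))) \<le> q"
proof -
  show q0: "0 \<le> q" using assms by (simp add: q_def)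
  show "q \<le> 1" by (simp add: q_def)
  show "(1-p) + p*(q*(1 - \<pi>*(1-q))) \<le> q"
  proof (cases "1 \<le> (1-p)/(p*\<pi>)")
    case True
    then have "q = 1" by (simp add: q_def)
    then show ?thesis by simp
  next
    case False
    then have qq: "q = (1-p)/(p*\<pi>)" by (simp add: q_def)
    have h: "p*q*\<pi> = 1-p" using assms(1,3) unfolding qq by (simp add: field_simps)
    have e: "p*(q*(1 - \<pi>*(1-q))) = p*q - (p*q*\<pi>) + (p*q*\<pi>)*q" by (simp add: algebra_simps)
    then have "p*(q*(1 - \<pi>*(1-q))) = p*q - (1-p) + (1-p)*q" unfolding h .
    then have "(1-p) + p*(q*(1 - \<pi>*(1-q))) = q" by (simp add: algebra_simps)
    then show ?thesis by simp
  qed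
qed

theorem theorem1p1:
  fixes eta :: "enat pmf" and p :: "nat \<Rightarrow> real" and \<epsilon> :: real
  assumes "pmf eta 0 < 1"
    and "\<forall>n. 0 < p n \<and> p n \<le> 1"
    and "p \<longlonglongrightarrow> 1"
    and "0 < \<epsilon>" and "\<epsilon> < 1"
  shows "(\<lambda>n. frog_prob_ge eta (p n) n ((1 - \<epsilon>) * real n)) \<longlonglongrightarrow> 1"
proof (cases "pmf eta \<infinity> > 0")
  case True
  have "frog_prob_ge eta (p n) n ((1 - \<epsilon>) * real n) = 1" for n
  proof -
    have "0 \<le> \<epsilon> * real n" using assms(4) by simp
    then have "(1 - \<epsilon>) * real n \<le> real n" by (simp add: algebra_simps)
    then show ?thesis using True by (simp add: frog_prob_ge_def)
  qed
  then show ?thesis by simp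
next
  case False
  then have inf: "pmf eta \<infinity> = 0" using pmf_nonneg[of eta \<infinity>] by linarith
  define m where "m = (\<integral>k. bo k \<partial>map_pmf the_enat eta)"
  have m0: "0 < m" unfolding m_def by (rule m_pos[OF assms(1) inf])
  have e0: "0 < \<epsilon>" "\<epsilon> < 1" using assms by auto
  define f where "f n = frog_prob_ge eta (p n) n ((1 - \<epsilon>) * real n)" for n
  define L where "L n = 1 - (1/real n + 2*(1 - p n)/(p n * m * \<epsilon>) + (4/m^2) * (1/(real n - 1) + 1/(\<epsilon> * real n - 2)))" for n
  have p1: "(\<lambda>n. 1 - p n) \<longlonglongrightarrow> 0" using assms(3) by (intro tendsto_eq_intros) auto
  have lim1: "(\<lambda>n. 1/real n) \<longlonglongrightarrow> 0" by real_asymp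
  have lim2: "(\<lambda>n. 1/(real n - 1)) \<longlonglongrightarrow> 0" by real_asymp
  have lim3: "(\<lambda>n. 1/(\<epsilon> * real n - 2)) \<longlonglongrightarrow> 0" using e0(1) by real_asymp
  have lim4: "(\<lambda>n. 2*(1 - p n)/(p n * m * \<epsilon>)) \<longlonglongrightarrow> 2*0/(1 * m * \<epsilon>)"
    using m0 e0 by (intro tendsto_intros p1 assms(3)) auto
  have limL: "L \<longlonglongrightarrow> 1 - (0 + 0 + (4/m^2) * (0 + 0))"
    unfolding L_def using lim4 by (intro tendsto_intros lim1 lim2 lim3) auto
  have ev: "eventually (\<lambda>n. L n \<le> f n) sequentially"
  proof -
    have "eventually (\<lambda>n. nat \<lceil>3/\<epsilon>\<rceil> + 3 \<le> n) sequentially" by (rule eventually_ge_at_top)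
    then show ?thesis
    proof eventually_elim
      case (elim n)
      have n3: "3 \<le> n" using elim by simp
      have "3/\<epsilon> \<le> real n" using elim by linarith
      then have en: "3 \<le> \<epsilon> * real n" using e0 by (simp add: field_simps)
      define K where "K = nat \<lfloor>\<epsilon> * real n\<rfloor>"
      have Kr: "real K = of_int \<lfloor>\<epsilon> * real n\<rfloor>" using en by (simp add: K_def)
      have Kle: "real K \<le> \<epsilon> * real n" using Kr by simp
      have Kgt: "\<epsilon> * real n - 1 < real K" using Kr by linarith
      have K2: "2 \<le> K" using Kgt en by linarith
      have "\<epsilon> * real n < real n" using e0 n3 by simp
      then have Kn1: "K + 1 \<le> n" using Kle by linarith
      have Lle1: "L n \<le> 1"
      proof -
        have pn0: "0 < p n" "p n \<le> 1" using assms(2) by auto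
        have "0 \<le> 2*(1 - p n)/(p n * m * \<epsilon>)" using pn0 m0 e0 by (intro divide_nonneg_pos mult_pos_pos) auto
        moreover have "0 \<le> 1/(real n - 1)" "0 \<le> 1/(\<epsilon> * real n - 2)" using n3 en by auto
        ultimately have "0 \<le> (4/m^2) * (1/(real n - 1) + 1/(\<epsilon> * real n - 2))" by simp
        moreover have "0 \<le> 1/real n" by simp
        ultimately show ?thesis unfolding L_def using \<open>0 \<le> 2*(1 - p n)/(p n * m * \<epsilon>)\<close> by linarith
      qed
      show "L n \<le> f n"
      proof (cases "p n = 1")
        case True
        have "0 \<le> \<epsilon> * real n" using e0 by simp
        then have "(1 - \<epsilon>) * real n \<le> real n" by (simp add: algebra_simps)
        then have "f n = 1" using True by (simp add: f_def frog_prob_ge_def)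
        then show ?thesis using Lle1 by simp
      next
        case False
        have pn: "0 < p n" "p n < 1" using assms(2) False by (auto simp: order.not_eq_order_implies_strict spec[of _ n])
        define \<pi> where "\<pi> = m*(real K+1)/(2*(real n-1))"
        have pig: "m * \<epsilon> / 2 \<le> \<pi>"
        proof -
          have "\<epsilon> * (real n - 1) \<le> real K + 1" using Kgt e0 by (simp add: algebra_simps)
          then have "\<epsilon> \<le> (real K + 1)/(real n - 1)" using n3 by (simp add: field_simps)
          then have "m * \<epsilon> \<le> m * ((real K + 1)/(real n - 1))" using m0 by (intro mult_left_mono) auto
          then show ?thesis using n3 by (simp add: \<pi>_def field_simps)
        qed
        have pi0: "0 < \<pi>" using pig m0 e0 by (smt (verit) divide_pos_pos mult_pos_pos)
        define q where "q = min 1 ((1 - p n)/(p n * \<pi>))"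
        have qc: "0 \<le> q" "q \<le> 1" "(1 - p n) + p n*(q*(1 - \<pi>*(1-q))) \<le> q"
          using q_cond[OF pn(1) order.strict_implies_order[OF pn(2)] pi0] unfolding q_def by auto
        have low: "1 - (1/real n + q + (4/m^2) * (1/(real n - 1) + 1/(real K - 1))) \<le> f n"
          unfolding f_def
          by (rule prob_ge_lower[OF _ K2 Kle Kn1 pn inf m_def m0 qc(1,2)]) (use n3 qc(3) in \<open>simp_all add: \<pi>_def\<close>)
        have qle: "q \<le> 2*(1 - p n)/(p n * m * \<epsilon>)"
        proof -
          have "q \<le> (1 - p n)/(p n * \<pi>)" by (simp add: q_def)
          also have "\<dots> \<le> (1 - p n)/(p n * (m * \<epsilon> / 2))"
            using pn m0 e0 pig pi0 by (intro divide_left_mono mult_left_mono mult_pos_pos) auto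
          also have "\<dots> = 2*(1 - p n)/(p n * m * \<epsilon>)" by (simp add: field_simps)
          finally show ?thesis .
        qed
        have Kle2: "1/(real K - 1) \<le> 1/(\<epsilon> * real n - 2)"
          using Kgt en by (intro divide_left_mono) auto
        have "(4/m^2) * (1/(real n - 1) + 1/(real K - 1)) \<le> (4/m^2) * (1/(real n - 1) + 1/(\<epsilon> * real n - 2))"
          using Kle2 by (intro mult_left_mono) auto
        then have "L n \<le> 1 - (1/real n + q + (4/m^2) * (1/(real n - 1) + 1/(real K - 1)))"
          unfolding L_def using qle by linarith
        then show ?thesis using low by linarith
      qed
    qed
  qed
  have ev2: "eventually (\<lambda>n. f n \<le> 1) sequentially"
    by (simp add: f_def frog_prob_ge_le1)
  have "f \<longlonglongrightarrow> 1"
    by (rule tendsto_sandwich[OF ev ev2 _ tendsto_const]) (use limL in simp)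
  then show ?thesis unfolding f_def[abs_def] .
qed

end
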